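(* There exist measurable subsets \(A\subset\mathbb{R}^{\mathbb{N}}\) that are atoms for \(\mu\).
   Context: Let $\mathcal{B}$ be the Borel $\sigma$-algebra of $\mathbb{R}$, $\lambda$ the Lebesgue measure, and $\mathcal{B}_{\infty}$ the $\sigma$-algebra on $\mathbb{R}^{\mathbb{N}}$ generated by the cylinder sets $\prod_{i=1}^{m}C_{i}\times\prod_{i=m+1}^{\infty}\mathbb{R}$ with $C_i\in\mathcal{B}$, $m\in\mathbb{N}$. Let $\mathcal{F}(\mathcal{B},\lambda)$ be the set of finite rectangles $\prod_{i\in\mathbb{N}}C_{i}$ with $C_i\in\mathcal{B}$ and $\prod_{i}\lambda(C_i)\in[0,\infty)$, with $\mathrm{vol}(\prod_{i}C_i):=\prod_i\lambda(C_i)$. The measure $\mu$ is the restriction to $\mathcal{B}_{\infty}$ of the outer measure $\mu^{\ast}(A):=\inf\{\sum_{n}\mathrm{vol}(\mathscr{C}_{n}) : \mathscr{C}_{n}\in\mathcal{F}(\mathcal{B},\lambda),\ A\subset\bigcup_{n}\mathscr{C}_{n}\}$ ($\inf\varnothing=\infty$). A measurable set $A$ with $\mu(A)>0$ is an atom if every measurable $B\subset A$ satisfies $\mu(B)\in\{0,\mu(A)\}$. *)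

theory Defs
  imports "HOL-Analysis.Analysis"
begin

text \<open>Points of R^N are functions nat => real; the paper's index i = 1,2,... corresponds
  to index i-1 here.\<close>

definition cyl_sets :: "(nat \<Rightarrow> real) set set" where
  "cyl_sets = {A. \<exists>m C. 1 \<le> m \<and> (\<forall>i<m. C i \<in> sets borel) \<and>
                        A = {x. \<forall>i<m. x i \<in> C i}}"

definition B_inf :: "(nat \<Rightarrow> real) set set" where
  "B_inf = sigma_sets UNIV cyl_sets"

definition vol :: "(nat \<Rightarrow> real set) \<Rightarrow> ennreal" where
  "vol C = lim (\<lambda>n. \<Prod>i<n. emeasure lborel (C i))"

definition finite_rect :: "(nat \<Rightarrow> real set) \<Rightarrow> bool" where
  "finite_rect C \<longleftrightarrow> (\<forall>i. C i \<in> sets borel) \<and>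
     (\<exists>L. (\<lambda>n. \<Prod>i<n. emeasure lborel (C i)) \<longlonglongrightarrow> L \<and> L < \<infinity>)"

text \<open>The outer measure mu*, infimum over countable covers by finite rectangles
  (Inf of the empty set is \<infinity> in ennreal).\<close>
definition mu_outer :: "(nat \<Rightarrow> real) set \<Rightarrow> ennreal" where
  "mu_outer A = (INF R \<in> {R :: nat \<Rightarrow> nat \<Rightarrow> real set.
        (\<forall>n. finite_rect (R n)) \<and> A \<subseteq> (\<Union>n. Pi UNIV (R n))}.
        (\<Sum>n. vol (R n)))"

text \<open>mu is the restriction of mu* to B_infty; atoms of mu.\<close>
definition mu_atom :: "(nat \<Rightarrow> real) set \<Rightarrow> bool" where
  "mu_atom A \<longleftrightarrow> A \<in> B_inf \<and> mu_outer A > 0 \<and>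
     (\<forall>B \<in> B_inf. B \<subseteq> A \<longrightarrow> mu_outer B = 0 \<or> mu_outer B = mu_outer A)"

end

theory Submission imports Defs begin

lemma real_key:
  fixes a b :: "nat \<Rightarrow> real" and l :: real
  assumes a0: "\<And>i. 0 \<le> a i" and b0: "\<And>i. 0 \<le> b i" and ba: "\<And>i. b i \<le> a i"
    and bodd: "\<And>i. odd i \<Longrightarrow> b i \<le> 1/2"
    and lim: "(\<lambda>n. \<Prod>i<n. a i) \<longlonglongrightarrow> l"
  shows "(\<lambda>n. \<Prod>i<n. b i) \<longlonglongrightarrow> 0"
proof (cases "l = 0")
  case True
  show ?thesis
  proof (rule tendsto_sandwich[of "\<lambda>_. 0" _ _ "\<lambda>n. \<Prod>i<n. a i"])
    show "\<forall>\<^sub>F n in sequentially. 0 \<le> (\<Prod>i<n. b i)" using b0 by (simp add: prod_nonneg)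
    show "\<forall>\<^sub>F n in sequentially. (\<Prod>i<n. b i) \<le> (\<Prod>i<n. a i)"
      using b0 ba by (simp add: prod_mono)
  qed (use lim True in auto)
next
  case False
  define p where "p n = (\<Prod>i<n. a i)" for n
  have pnz: "p n \<noteq> 0" for n
  proof
    assume "p n = 0"
    then have "\<forall>m\<ge>n. p m = 0"
      by (auto simp: p_def prod_zero_iff)
    then have "p \<longlonglongrightarrow> 0" by (intro tendsto_eventually) (auto simp: eventually_sequentially)
    with lim False show False unfolding p_def[abs_def] using LIMSEQ_unique by blast
  qed
  have "(\<lambda>n. p (Suc n) / p n) \<longlonglongrightarrow> l / l"
    using lim False unfolding p_def[abs_def]
    by (intro tendsto_divide LIMSEQ_Suc) auto
  moreover have "p (Suc n) / p n = a n" for n using pnz[of n] by (simp add: p_def)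
  ultimately have "a \<longlonglongrightarrow> 1" using False by simp
  then have "\<forall>\<^sub>F n in sequentially. a n < 4/3"
    by (rule order_tendstoD) simp
  then obtain N where N: "\<And>n. n \<ge> N \<Longrightarrow> a n \<le> 4/3"
    by (auto simp: eventually_sequentially) (meson less_imp_le)
  define q where "q n = (\<Prod>i<n. b i)" for n
  have q0: "0 \<le> q n" for n using b0 by (simp add: q_def prod_nonneg)
  have stp: "q (Suc (Suc n)) \<le> (9/10)^2 * q n" if "n \<ge> N" for n
  proof -
    have "b n * b (Suc n) \<le> 2/3"
    proof (cases "odd n")
      case True
      have "b n * b (Suc n) \<le> (1/2) * (4/3)"
        using bodd[OF True] ba[of "Suc n"] N[of "Suc n"] that b0[of n] b0[of "Suc n"]
        by (intro mult_mono) auto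
      then show ?thesis by simp
    next
      case False
      have "b n * b (Suc n) \<le> (4/3) * (1/2)"
        using bodd[of "Suc n"] False ba[of n] N[of n] that b0[of n] b0[of "Suc n"]
        by (intro mult_mono) auto
      then show ?thesis by simp
    qed
    then have "q n * (b n * b (Suc n)) \<le> q n * (9/10)^2"
      using q0[of n] by (intro mult_left_mono) (auto simp: power2_eq_square)
    then show ?thesis by (simp add: q_def mult.assoc mult.commute mult.left_commute)
  qed
  define M where "M = max (q N / (9/10)^N) (q (Suc N) / (9/10)^(Suc N))"
  have bnd: "q n \<le> M * (9/10)^n \<and> q (Suc n) \<le> M * (9/10)^(Suc n)" if "n \<ge> N" for n
    using that
  proof (induction n rule: dec_induct)
    case base
    have c: "(0::real) < (9/10)^N" "(0::real) < (9/10)^Suc N" by auto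
    have "q N / (9/10)^N \<le> M" "q (Suc N) / (9/10)^Suc N \<le> M" unfolding M_def by auto
    then show ?case using c by (simp add: pos_divide_le_eq mult.commute)
  next
    case (step n)
    have "q (Suc (Suc n)) \<le> (9/10)^2 * q n" using step.hyps(1) by (rule stp)
    also have "\<dots> \<le> (9/10)^2 * (M * (9/10)^n)" using step.IH by simp
    also have "\<dots> = M * (9/10)^(Suc (Suc n))" by (simp add: power2_eq_square)
    finally show ?case using step.IH by simp
  qed
  have "(\<lambda>n. M * (9/10::real)^n) \<longlonglongrightarrow> M * 0"
    by (intro tendsto_mult tendsto_const LIMSEQ_power_zero) auto
  then have lm: "(\<lambda>n. M * (9/10::real)^n) \<longlonglongrightarrow> 0" by simp
  have ev: "\<forall>\<^sub>F n in sequentially. q n \<le> M * (9/10)^n"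
    unfolding eventually_sequentially using bnd by blast
  have "q \<longlonglongrightarrow> 0"
    by (rule tendsto_sandwich[OF _ ev tendsto_const lm]) (simp add: q0)
  then show ?thesis by (simp add: q_def[abs_def])
qed


definition Cs :: "nat \<Rightarrow> real set" where "Cs i = (if odd i then {0..1/2} else UNIV)"

lemma Cs_borel[measurable]: "Cs i \<in> sets borel" by (simp add: Cs_def)

lemma inf_factor:
  assumes fr: "finite_rect D" and pos: "\<And>i. emeasure lborel (D i) > 0"
  shows "emeasure lborel (D j) < \<infinity>"
proof (rule ccontr)
  assume "\<not> emeasure lborel (D j) < \<infinity>"
  then have top: "emeasure lborel (D j) = \<infinity>" using less_top by (simp add: less_le)
  from fr obtain L where L: "(\<lambda>n. \<Prod>i<n. emeasure lborel (D i)) \<longlonglongrightarrow> L" "L < \<infinity>"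
    unfolding finite_rect_def by blast
  have "(\<Prod>i<n. emeasure lborel (D i)) = \<infinity>" if "n > j" for n
  proof -
    have jn: "j \<in> {..<n}" using that by simp
    have nz: "(\<Prod>i\<in>{..<n}-{j}. emeasure lborel (D i)) \<noteq> 0"
      using pos by (simp add: prod_zero_iff) (metis not_gr_zero)
    have "(\<Prod>i<n. emeasure lborel (D i)) = emeasure lborel (D j) * (\<Prod>i\<in>{..<n}-{j}. emeasure lborel (D i))"
      using prod.remove[OF _ jn] by simp
    then show ?thesis using top nz by (simp add: ennreal_mult_eq_top_iff)
  qed
  then have "(\<lambda>n. \<Prod>i<n. emeasure lborel (D i)) \<longlonglongrightarrow> \<infinity>"
    by (intro tendsto_eventually) (auto simp: eventually_sequentially intro!: exI[of _ "Suc j"])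
  with L show False using LIMSEQ_unique by fastforce
qed

lemma small:
  assumes fr: "finite_rect D"
  shows "(\<lambda>n. \<Prod>i<n. emeasure lborel (D i \<inter> Cs i)) \<longlonglongrightarrow> 0"
proof (cases "\<exists>j. emeasure lborel (D j) = 0")
  case True
  then obtain j where j: "emeasure lborel (D j) = 0" by blast
  have Db: "D j \<in> sets borel" using fr by (simp add: finite_rect_def)
  have j': "emeasure lborel (D j \<inter> Cs j) = 0"
    using emeasure_mono[of "D j \<inter> Cs j" "D j" lborel] Db j by simp
  have "(\<Prod>i<n. emeasure lborel (D i \<inter> Cs i)) = 0" if "n > j" for n
    using that j' by (simp add: prod_zero_iff) (metis lessThan_iff)
  then show ?thesis
    by (intro tendsto_eventually) (auto simp: eventually_sequentially intro!: exI[of _ "Suc j"])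
next
  case False
  then have pos: "\<And>i. emeasure lborel (D i) > 0" using gr_zeroI by blast
  have fin: "\<And>i. emeasure lborel (D i) < \<infinity>" using inf_factor[OF fr pos] .
  have Db: "\<And>i. D i \<in> sets borel" using fr by (simp add: finite_rect_def)
  define a where "a i = enn2real (emeasure lborel (D i))" for i
  define b where "b i = enn2real (emeasure lborel (D i \<inter> Cs i))" for i
  have le: "emeasure lborel (D i \<inter> Cs i) \<le> emeasure lborel (D i)" for i
    by (rule emeasure_mono) (auto simp: Db)
  have ea: "emeasure lborel (D i) = ennreal (a i)" for i
    using fin[of i] by (simp add: a_def ennreal_enn2real_if)
  have eb: "emeasure lborel (D i \<inter> Cs i) = ennreal (b i)" for i
    using fin[of i] le[of i] by (simp add: b_def ennreal_enn2real_if)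
  have a0: "0 \<le> a i" and b0: "0 \<le> b i" for i by (auto simp: a_def b_def)
  have ba: "b i \<le> a i" for i
    unfolding a_def b_def using le[of i] fin[of i] by (intro enn2real_mono) auto
  have bodd: "b i \<le> 1/2" if "odd i" for i
  proof -
    have "emeasure lborel (D i \<inter> Cs i) \<le> emeasure lborel {0..1/2::real}"
      using that by (intro emeasure_mono) (auto simp: Cs_def)
    then have "ennreal (b i) \<le> ennreal (1/2)" using eb by simp
    then show ?thesis by (subst (asm) ennreal_le_iff) auto
  qed
  from fr obtain L where L: "(\<lambda>n. \<Prod>i<n. emeasure lborel (D i)) \<longlonglongrightarrow> L" "L < \<infinity>"
    unfolding finite_rect_def by blast
  have pe: "(\<Prod>i<n. emeasure lborel (D i)) = ennreal (\<Prod>i<n. a i)" for n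
    by (simp add: ea prod_ennreal a0)
  obtain l where l: "L = ennreal l" "0 \<le> l" using L(2)
    by (cases L) auto
  have "(\<lambda>n. enn2real (ennreal (\<Prod>i<n. a i))) \<longlonglongrightarrow> l"
    using L(1) l by (intro tendsto_enn2real) (auto simp: pe)
  then have "(\<lambda>n. \<Prod>i<n. a i) \<longlonglongrightarrow> l" by (simp add: prod_nonneg a0)
  from real_key[OF a0 b0 ba bodd this] have "(\<lambda>n. ennreal (\<Prod>i<n. b i)) \<longlonglongrightarrow> ennreal 0"
    by (rule tendsto_ennrealI)
  then show ?thesis by (simp add: eb prod_ennreal b0)
qed


definition Aat :: "(nat \<Rightarrow> real) set" where "Aat = {x. \<forall>i. x i \<in> Cs i}"

lemma A_in: "Aat \<in> B_inf"
proof -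
  have eq: "Aat = (\<Inter>k. {x. \<forall>i<Suc k. x i \<in> Cs i})"
    unfolding Aat_def by auto
  have "{x. \<forall>i<Suc k. x i \<in> Cs i} \<in> cyl_sets" for k
    unfolding cyl_sets_def by (rule CollectI, rule exI[of _ "Suc k"], rule exI[of _ Cs]) auto
  then have "(\<Inter>k. {x. \<forall>i<Suc k. x i \<in> Cs i}) \<in> sigma_sets UNIV cyl_sets"
    by (intro sigma_sets_Inter sigma_sets.Basic) auto
  then show ?thesis unfolding B_inf_def eq .
qed

lemma cover_zero:
  fixes R :: "nat \<Rightarrow> nat \<Rightarrow> real set"
  assumes BA: "B \<subseteq> Aat" and fr: "\<And>n. finite_rect (R n)" and cov: "B \<subseteq> (\<Union>n. Pi UNIV (R n))"
  shows "mu_outer B = 0"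
proof -
  define R' where "R' n i = R n i \<inter> Cs i" for n i
  have lim: "(\<lambda>m. \<Prod>i<m. emeasure lborel (R' n i)) \<longlonglongrightarrow> 0" for n
    unfolding R'_def by (rule small[OF fr])
  have fr': "finite_rect (R' n)" for n
    using fr[of n] lim[of n] unfolding finite_rect_def R'_def by auto
  have vol0: "vol (R' n) = 0" for n
    unfolding vol_def using lim[of n] by (rule limI)
  have cov': "B \<subseteq> (\<Union>n. Pi UNIV (R' n))"
  proof
    fix x assume x: "x \<in> B"
    with cov obtain n where "x \<in> Pi UNIV (R n)" by blast
    moreover have "x i \<in> Cs i" for i using x BA by (auto simp: Aat_def)
    ultimately have "x \<in> Pi UNIV (R' n)" by (auto simp: R'_def)
    then show "x \<in> (\<Union>n. Pi UNIV (R' n))" by blast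
  qed
  have "mu_outer B \<le> (\<Sum>n. vol (R' n))"
    unfolding mu_outer_def by (rule INF_lower) (use fr' cov' in auto)
  also have "\<dots> = 0" by (simp add: vol0)
  finally show ?thesis by simp
qed

lemma no_cover:
  fixes R :: "nat \<Rightarrow> nat \<Rightarrow> real set"
  assumes fr: "\<And>n. finite_rect (R n)" and cov: "Aat \<subseteq> (\<Union>n. Pi UNIV (R n))"
  shows False
proof -
  have Rb: "R n i \<in> sets borel" for n i using fr[of n] by (simp add: finite_rect_def)
  define Z where "Z j = (\<Union>n. if emeasure lborel (R n j) = 0 then R n j else {})" for j
  define F where "F j = (if even j \<and> emeasure lborel (R (j div 2) j) < \<infinity> then R (j div 2) j else {})" for j
  have Zn: "Z j \<in> null_sets lborel" for j
    unfolding Z_def by (intro null_sets_UN) (auto simp: Rb)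
  have Fb: "F j \<in> sets lborel" for j by (simp add: F_def Rb)
  have Ff: "emeasure lborel (F j) < \<infinity>" for j by (simp add: F_def)
  have "\<exists>y. y \<notin> Z j \<and> y \<notin> F j \<and> y \<in> Cs j" for j
  proof (cases "odd j")
    case True
    show ?thesis
    proof (rule ccontr)
      assume "\<not> ?thesis"
      then have "{0..1/2::real} \<subseteq> Z j" using True by (auto simp: F_def Cs_def)
      then have "emeasure lborel {0..1/2::real} \<le> emeasure lborel (Z j)"
        using Zn[of j] by (intro emeasure_mono) auto
      then show False using null_setsD1[OF Zn[of j]] by simp
    qed
  next
    case False
    show ?thesis
    proof (rule ccontr)
      assume "\<not> ?thesis"
      then have "UNIV \<subseteq> Z j \<union> F j" using False by (auto simp: Cs_def)
      then have "emeasure lborel (UNIV::real set) \<le> emeasure lborel (Z j \<union> F j)"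
        using Zn[of j] Fb[of j] by (intro emeasure_mono) auto
      also have "\<dots> \<le> emeasure lborel (Z j) + emeasure lborel (F j)"
        using Zn[of j] Fb[of j] by (intro emeasure_subadditive) auto
      also have "\<dots> < \<infinity>" using null_setsD1[OF Zn[of j]] Ff[of j] by simp
      finally show False by simp
    qed
  qed
  then obtain x where x: "\<And>j. x j \<notin> Z j \<and> x j \<notin> F j \<and> x j \<in> Cs j" by metis
  then have "x \<in> Aat" by (simp add: Aat_def)
  with cov obtain n where n: "x \<in> Pi UNIV (R n)" by blast
  show False
  proof (cases "\<exists>j. emeasure lborel (R n j) = 0")
    case True
    then obtain j where "emeasure lborel (R n j) = 0" by blast
    then have "R n j \<subseteq> Z j" unfolding Z_def by (auto intro!: exI[of _ n])
    with n x[of j] show False by auto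
  next
    case False
    then have pos: "\<And>i. emeasure lborel (R n i) > 0" using gr_zeroI by blast
    have "emeasure lborel (R n (2*n)) < \<infinity>" by (rule inf_factor[OF fr pos])
    then have "F (2*n) = R n (2*n)" by (simp add: F_def)
    with n x[of "2*n"] show False by auto
  qed
qed

theorem propositionA2:
  shows "\<exists>A. mu_atom A"
proof -
  have top: "mu_outer Aat = \<infinity>"
  proof -
    have "{R :: nat \<Rightarrow> nat \<Rightarrow> real set. (\<forall>n. finite_rect (R n)) \<and> Aat \<subseteq> (\<Union>n. Pi UNIV (R n))} = {}"
      using no_cover by blast
    then show ?thesis unfolding mu_outer_def by (simp only: image_empty Inf_empty) simp
  qed
  have "mu_atom Aat"
    unfolding mu_atom_def
  proof (intro conjI ballI impI)
    show "Aat \<in> B_inf" by (rule A_in)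
    show "0 < mu_outer Aat" by (simp add: top)
    fix B assume "B \<in> B_inf" "B \<subseteq> Aat"
    show "mu_outer B = 0 \<or> mu_outer B = mu_outer Aat"
    proof (cases "\<exists>R :: nat \<Rightarrow> nat \<Rightarrow> real set. (\<forall>n. finite_rect (R n)) \<and> B \<subseteq> (\<Union>n. Pi UNIV (R n))")
      case True
      then obtain R :: "nat \<Rightarrow> nat \<Rightarrow> real set" where "\<And>n. finite_rect (R n)" "B \<subseteq> (\<Union>n. Pi UNIV (R n))"
        by blast
      then have "mu_outer B = 0" using cover_zero[OF \<open>B \<subseteq> Aat\<close>] by blast
      then show ?thesis by simp
    next
      case False
      then have "{R :: nat \<Rightarrow> nat \<Rightarrow> real set. (\<forall>n. finite_rect (R n)) \<and> B \<subseteq> (\<Union>n. Pi UNIV (R n))} = {}"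
        by blast
      then have "mu_outer B = \<infinity>" unfolding mu_outer_def by (simp only: image_empty Inf_empty) simp
      then show ?thesis by (simp add: top)
    qed
  qed
  then show ?thesis by blast
qed

end
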